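(* Let $\Lambda$ be a left cancellative small category, $v\in\Lambda^0$, and let $C\subseteq\mathcal D^{(0)}_v$ be a filter. Then $C\in v\Lambda^{**}$ if and only if for every $F\in\mathcal D^{(0)}_v$ such that $F\cap E\ne\varnothing$ for all $E\in C$, there exists $E\in C$ with $E\subseteq F$.
   Context: A left cancellative small category (LCSC) is a small category $\Lambda$ such that $\alpha\beta=\alpha\gamma$ implies $\beta=\gamma$. Composition $\alpha\beta$ is defined when $s(\alpha)=r(\beta)$; $\Lambda^0$ is the set of objects; $v\Lambda=\{\alpha:r(\alpha)=v\}$. For $\alpha\in\Lambda$, $\tau^\alpha(\beta)=\alpha\beta$ on $s(\alpha)\Lambda$ and $\sigma^\alpha:\alpha\Lambda\to s(\alpha)\Lambda$ is its inverse. A zigzag is a tuple $\zeta=(\alpha_1,\beta_1,\dots,\alpha_n,\beta_n)$ with $r(\alpha_i)=r(\beta_i)$ and $s(\alpha_{i+1})=s(\beta_i)$, $s(\zeta)=s(\beta_n)$; the zigzag map $\varphi_\zeta=\sigma^{\alpha_1}\circ\tau^{\beta_1}\circ\cdots\circ\sigma^{\alpha_n}\circ\tau^{\beta_n}$ (partial map) has domain $A(\zeta)\subseteq s(\zeta)\Lambda$. $\mathcal D^{(0)}_v$ is the set of nonempty $A(\zeta)$ with $s(\zeta)=v$ (closed under nonempty intersection). A filter in $\mathcal D^{(0)}_v$ is a nonempty $C\subseteq\mathcal D^{(0)}_v$ closed under intersection and under supersets within $\mathcal D^{(0)}_v$. A finite $\mathcal F\subseteq\mathcal D^{(0)}_v$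 covers the filter $C$ if some $E\in C$ satisfies $E\subseteq\bigcup\mathcal F$. $v\Lambda^*$ is the set of filters $C$ in $\mathcal D^{(0)}_v$ such that every finite $\mathcal F\subseteq\mathcal D^{(0)}_v$ with $\mathcal F\cap C=\varnothing$ does not cover $C$. $v\Lambda^{**}$ is the set of maximal elements of $v\Lambda^*$ with respect to inclusion. *)

theory Defs
  imports Main
begin

text \<open>A small category is given by a set of objects Obj, a set of morphisms Mor,
range r and source s maps, a composition cmp (cmp a b = ab, defined when s a = r b)
and identities idm.  Composition outside its domain is unspecified.\<close>

definition small_category ::
  "'o set \<Rightarrow> 'm set \<Rightarrow> ('m \<Rightarrow> 'o) \<Rightarrow> ('m \<Rightarrow> 'o) \<Rightarrow> ('m \<Rightarrow> 'm \<Rightarrow> 'm) \<Rightarrow> ('o \<Rightarrow> 'm) \<Rightarrow> bool" where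
  "small_category Obj Mor r s cmp idm \<longleftrightarrow>
     (\<forall>a\<in>Mor. r a \<in> Obj \<and> s a \<in> Obj) \<and>
     (\<forall>x\<in>Obj. idm x \<in> Mor \<and> r (idm x) = x \<and> s (idm x) = x) \<and>
     (\<forall>a\<in>Mor. \<forall>b\<in>Mor. s a = r b \<longrightarrow>
         cmp a b \<in> Mor \<and> r (cmp a b) = r a \<and> s (cmp a b) = s b) \<and>
     (\<forall>a\<in>Mor. cmp (idm (r a)) a = a \<and> cmp a (idm (s a)) = a) \<and>
     (\<forall>a\<in>Mor. \<forall>b\<in>Mor. \<forall>c\<in>Mor. s a = r b \<longrightarrow> s b = r c \<longrightarrow>
         cmp (cmp a b) c = cmp a (cmp b c))"

definition lcsc ::
  "'o set \<Rightarrow> 'm set \<Rightarrow> ('m \<Rightarrow> 'o) \<Rightarrow> ('m \<Rightarrow> 'o) \<Rightarrow> ('m \<Rightarrow> 'm \<Rightarrow> 'm) \<Rightarrow> ('o \<Rightarrow> 'm) \<Rightarrow> bool" where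
  "lcsc Obj Mor r s cmp idm \<longleftrightarrow> small_category Obj Mor r s cmp idm \<and>
     (\<forall>a\<in>Mor. \<forall>b\<in>Mor. \<forall>c\<in>Mor. s a = r b \<longrightarrow> s a = r c \<longrightarrow> cmp a b = cmp a c \<longrightarrow> b = c)"

text \<open>One step sigma^alpha o tau^beta of a zigzag map, as a partial map.\<close>
definition zz_step ::
  "'m set \<Rightarrow> ('m \<Rightarrow> 'o) \<Rightarrow> ('m \<Rightarrow> 'o) \<Rightarrow> ('m \<Rightarrow> 'm \<Rightarrow> 'm) \<Rightarrow> 'm \<Rightarrow> 'm \<Rightarrow> 'm \<Rightarrow> 'm option" where
  "zz_step Mor r s cmp \<alpha> \<beta> \<gamma> =
     (if \<gamma> \<in> Mor \<and> r \<gamma> = s \<beta> \<and> (\<exists>\<delta>\<in>Mor. r \<delta> = s \<alpha> \<and> cmp \<alpha> \<delta> = cmp \<beta> \<gamma>)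
      then Some (THE \<delta>. \<delta> \<in> Mor \<and> r \<delta> = s \<alpha> \<and> cmp \<alpha> \<delta> = cmp \<beta> \<gamma>)
      else None)"

text \<open>Zigzag map of the zigzag [(alpha_1,beta_1),...,(alpha_n,beta_n)]:
 sigma^alpha_1 o tau^beta_1 o ... o sigma^alpha_n o tau^beta_n (rightmost applied first).\<close>
fun zz_map ::
  "'m set \<Rightarrow> ('m \<Rightarrow> 'o) \<Rightarrow> ('m \<Rightarrow> 'o) \<Rightarrow> ('m \<Rightarrow> 'm \<Rightarrow> 'm) \<Rightarrow> ('m \<times> 'm) list \<Rightarrow> 'm \<Rightarrow> 'm option" where
  "zz_map Mor r s cmp [] \<gamma> = Some \<gamma>"
| "zz_map Mor r s cmp ((\<alpha>, \<beta>) # \<zeta>) \<gamma> =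
     Option.bind (zz_map Mor r s cmp \<zeta> \<gamma>) (zz_step Mor r s cmp \<alpha> \<beta>)"

definition is_zigzag ::
  "'m set \<Rightarrow> ('m \<Rightarrow> 'o) \<Rightarrow> ('m \<Rightarrow> 'o) \<Rightarrow> ('m \<times> 'm) list \<Rightarrow> bool" where
  "is_zigzag Mor r s \<zeta> \<longleftrightarrow> \<zeta> \<noteq> [] \<and>
     (\<forall>i<length \<zeta>. fst (\<zeta>!i) \<in> Mor \<and> snd (\<zeta>!i) \<in> Mor \<and> r (fst (\<zeta>!i)) = r (snd (\<zeta>!i))) \<and>
     (\<forall>i. Suc i < length \<zeta> \<longrightarrow> s (fst (\<zeta>!Suc i)) = s (snd (\<zeta>!i)))"

definition zz_src :: "('m \<Rightarrow> 'o) \<Rightarrow> ('m \<times> 'm) list \<Rightarrow> 'o" where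
  "zz_src s \<zeta> = s (snd (last \<zeta>))"

definition zz_dom ::
  "'m set \<Rightarrow> ('m \<Rightarrow> 'o) \<Rightarrow> ('m \<Rightarrow> 'o) \<Rightarrow> ('m \<Rightarrow> 'm \<Rightarrow> 'm) \<Rightarrow> ('m \<times> 'm) list \<Rightarrow> 'm set" where
  "zz_dom Mor r s cmp \<zeta> = {\<gamma> \<in> Mor. r \<gamma> = zz_src s \<zeta> \<and> zz_map Mor r s cmp \<zeta> \<gamma> \<noteq> None}"

definition D0 ::
  "'m set \<Rightarrow> ('m \<Rightarrow> 'o) \<Rightarrow> ('m \<Rightarrow> 'o) \<Rightarrow> ('m \<Rightarrow> 'm \<Rightarrow> 'm) \<Rightarrow> 'o \<Rightarrow> 'm set set" where
  "D0 Mor r s cmp v = {zz_dom Mor r s cmp \<zeta> | \<zeta>.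
      is_zigzag Mor r s \<zeta> \<and> zz_src s \<zeta> = v \<and> zz_dom Mor r s cmp \<zeta> \<noteq> {}}"

definition is_filter_in :: "'m set set \<Rightarrow> 'm set set \<Rightarrow> bool" where
  "is_filter_in D C \<longleftrightarrow> C \<subseteq> D \<and> C \<noteq> {} \<and>
     (\<forall>E\<in>C. \<forall>F\<in>C. E \<inter> F \<in> C) \<and>
     (\<forall>E\<in>C. \<forall>F\<in>D. E \<subseteq> F \<longrightarrow> F \<in> C)"

definition covers :: "'m set set \<Rightarrow> 'm set set \<Rightarrow> bool" where
  "covers \<F> C \<longleftrightarrow> (\<exists>E\<in>C. E \<subseteq> \<Union>\<F>)"

definition LamStar ::
  "'m set \<Rightarrow> ('m \<Rightarrow> 'o) \<Rightarrow> ('m \<Rightarrow> 'o) \<Rightarrow> ('m \<Rightarrow> 'm \<Rightarrow> 'm) \<Rightarrow> 'o \<Rightarrow> 'm set set set" where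
  "LamStar Mor r s cmp v = {C. is_filter_in (D0 Mor r s cmp v) C \<and>
     (\<forall>\<F>. finite \<F> \<longrightarrow> \<F> \<subseteq> D0 Mor r s cmp v \<longrightarrow> \<F> \<inter> C = {} \<longrightarrow> \<not> covers \<F> C)}"

definition LamStarStar ::
  "'m set \<Rightarrow> ('m \<Rightarrow> 'o) \<Rightarrow> ('m \<Rightarrow> 'o) \<Rightarrow> ('m \<Rightarrow> 'm \<Rightarrow> 'm) \<Rightarrow> 'o \<Rightarrow> 'm set set set" where
  "LamStarStar Mor r s cmp v = {C \<in> LamStar Mor r s cmp v.
     \<forall>C'\<in>LamStar Mor r s cmp v. C \<subseteq> C' \<longrightarrow> C' = C}"

end

theory Submission
  imports Defs
begin

lemma zz_map_append:
  "zz_map Mor r s cmp (xs @ ys) g = Option.bind (zz_map Mor r s cmp ys g) (zz_map Mor r s cmp xs)"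
proof (induction xs arbitrary: g)
  case Nil
  then show ?case by (cases "zz_map Mor r s cmp ys g") auto
next
  case (Cons p xs)
  then show ?case by (cases p) simp
qed

lemma step_inv:
  assumes L: "lcsc Obj Mor r s cmp idm" and a: "a \<in> Mor" and b: "b \<in> Mor"
    and st: "zz_step Mor r s cmp a b g = Some d"
  shows "zz_step Mor r s cmp b a d = Some g"
proof -
  have canc: "\<And>x y z. x \<in> Mor \<Longrightarrow> y \<in> Mor \<Longrightarrow> z \<in> Mor \<Longrightarrow> s x = r y \<Longrightarrow> s x = r z
      \<Longrightarrow> cmp x y = cmp x z \<Longrightarrow> y = z"
    using L unfolding lcsc_def by blast
  from st have g: "g \<in> Mor" "r g = s b" and ex: "\<exists>\<delta>\<in>Mor. r \<delta> = s a \<and> cmp a \<delta> = cmp b g"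
    and dd: "d = (THE \<delta>. \<delta> \<in> Mor \<and> r \<delta> = s a \<and> cmp a \<delta> = cmp b g)"
    unfolding zz_step_def by (auto split: if_splits)
  from ex obtain d0 where d0: "d0 \<in> Mor" "r d0 = s a" "cmp a d0 = cmp b g" by blast
  have "d = d0" unfolding dd
    by (rule the_equality) (use d0 canc a in auto)
  with d0 have d: "d \<in> Mor" "r d = s a" "cmp a d = cmp b g" by auto
  have "(THE \<delta>. \<delta> \<in> Mor \<and> r \<delta> = s b \<and> cmp b \<delta> = cmp a d) = g"
    by (rule the_equality) (use g d canc b in auto)
  then show ?thesis using g d unfolding zz_step_def by auto
qed

definition rzz :: "('m \<times> 'm) list \<Rightarrow> ('m \<times> 'm) list" where
  "rzz \<zeta> = rev (map prod.swap \<zeta>)"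

lemma rzz_inv:
  assumes L: "lcsc Obj Mor r s cmp idm"
  shows "(\<forall>p\<in>set \<zeta>. fst p \<in> Mor \<and> snd p \<in> Mor) \<Longrightarrow> zz_map Mor r s cmp \<zeta> g = Some d
     \<Longrightarrow> zz_map Mor r s cmp (rzz \<zeta>) d = Some g"
proof (induction \<zeta> arbitrary: d)
  case Nil
  then show ?case by (simp add: rzz_def)
next
  case (Cons p \<zeta>)
  obtain a b where p: "p = (a, b)" by (cases p)
  from Cons.prems p obtain m where m: "zz_map Mor r s cmp \<zeta> g = Some m"
    and st: "zz_step Mor r s cmp a b m = Some d"
    by (cases "zz_map Mor r s cmp \<zeta> g") auto
  have "zz_step Mor r s cmp b a d = Some m"
    using step_inv[OF L _ _ st] Cons.prems p by auto
  moreover have "zz_map Mor r s cmp (rzz \<zeta>) m = Some g" using Cons m by auto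
  ultimately show ?case using p by (simp add: rzz_def zz_map_append)
qed

lemma is_zigzag_alt:
  "is_zigzag Mor r s \<zeta> \<longleftrightarrow> \<zeta> \<noteq> [] \<and>
     (\<forall>p\<in>set \<zeta>. fst p \<in> Mor \<and> snd p \<in> Mor \<and> r (fst p) = r (snd p)) \<and>
     successively (\<lambda>x y. s (fst y) = s (snd x)) \<zeta>"
  unfolding is_zigzag_def successively_conv_nth all_set_conv_all_nth
  by auto

lemma zigzag_rzz:
  assumes "is_zigzag Mor r s \<zeta>"
  shows "is_zigzag Mor r s (rzz \<zeta>)"
  using assms unfolding is_zigzag_alt rzz_def
  by (auto simp: successively_map elim!: successively_mono)

lemma D0_inter:
  assumes L: "lcsc Obj Mor r s cmp idm"
    and E: "E \<in> D0 Mor r s cmp v" and F: "F \<in> D0 Mor r s cmp v" and ne: "E \<inter> F \<noteq> {}"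
  shows "E \<inter> F \<in> D0 Mor r s cmp v"
proof -
  from E obtain z where z: "E = zz_dom Mor r s cmp z" "is_zigzag Mor r s z" "zz_src s z = v"
    unfolding D0_def by blast
  from F obtain x where x: "F = zz_dom Mor r s cmp x" "is_zigzag Mor r s x" "zz_src s x = v"
    unfolding D0_def by blast
  define w where "w = rzz z @ z @ rzz x @ x"
  have zne: "z \<noteq> []" and xne: "x \<noteq> []" using z x unfolding is_zigzag_def by auto
  have zm: "\<forall>p\<in>set z. fst p \<in> Mor \<and> snd p \<in> Mor" using z(2) unfolding is_zigzag_alt by auto
  have xm: "\<forall>p\<in>set x. fst p \<in> Mor \<and> snd p \<in> Mor" using x(2) unfolding is_zigzag_alt by auto
  have lr: "last (rzz y) = prod.swap (hd y)" "hd (rzz y) = prod.swap (last y)" if "y \<noteq> []" for y :: "('m \<times> 'm) list"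
    using that by (auto simp: rzz_def last_rev hd_rev last_map hd_map)
  have rne: "rzz y \<noteq> []" if "y \<noteq> []" for y :: "('m \<times> 'm) list" using that by (simp add: rzz_def)
  have wz: "is_zigzag Mor r s w"
    using zigzag_rzz[OF z(2)] zigzag_rzz[OF x(2)] z(2) x(2) zne xne z(3) x(3)
    unfolding w_def is_zigzag_alt
    by (auto simp: successively_append_iff lr rne zz_src_def)
  have ws: "zz_src s w = v" using x(3) xne by (simp add: w_def zz_src_def)
  have "zz_dom Mor r s cmp w = E \<inter> F"
  proof (intro set_eqI iffI)
    fix g assume g: "g \<in> zz_dom Mor r s cmp w"
    hence gm: "g \<in> Mor" "r g = v" and nn: "zz_map Mor r s cmp w g \<noteq> None"
      using ws unfolding zz_dom_def by auto
    from nn obtain d where d: "zz_map Mor r s cmp x g = Some d"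
      unfolding w_def zz_map_append by (cases "zz_map Mor r s cmp x g") auto
    have "zz_map Mor r s cmp (rzz x) d = Some g" using rzz_inv[OF L xm d] .
    with nn d have "zz_map Mor r s cmp z g \<noteq> None"
      unfolding w_def zz_map_append by (cases "zz_map Mor r s cmp z g") auto
    then show "g \<in> E \<inter> F" using d gm z(1,3) x(1,3) unfolding zz_dom_def by auto
  next
    fix g assume g: "g \<in> E \<inter> F"
    hence gm: "g \<in> Mor" "r g = v" using z x unfolding zz_dom_def by auto
    from g obtain d where d: "zz_map Mor r s cmp x g = Some d"
      using x(1) unfolding zz_dom_def by auto
    from g obtain e where e: "zz_map Mor r s cmp z g = Some e"
      using z(1) unfolding zz_dom_def by auto
    have "zz_map Mor r s cmp (rzz x) d = Some g" using rzz_inv[OF L xm d] .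
    moreover have "zz_map Mor r s cmp (rzz z) e = Some g" using rzz_inv[OF L zm e] .
    ultimately have "zz_map Mor r s cmp w g = Some g"
      using d e unfolding w_def zz_map_append by simp
    then show "g \<in> zz_dom Mor r s cmp w" using gm ws unfolding zz_dom_def by auto
  qed
  then show ?thesis using wz ws ne unfolding D0_def by auto
qed


lemma filter_props1: "is_filter_in D C \<Longrightarrow> C \<subseteq> D"
  by (simp add: is_filter_in_def)
lemma filter_props2: "is_filter_in D C \<Longrightarrow> C \<noteq> {}"
  by (simp add: is_filter_in_def)
lemma filter_props3: "is_filter_in D C \<Longrightarrow> E \<in> C \<Longrightarrow> F \<in> C \<Longrightarrow> E \<inter> F \<in> C"
  by (simp add: is_filter_in_def)
lemma filter_props4: "is_filter_in D C \<Longrightarrow> E \<in> C \<Longrightarrow> F \<in> D \<Longrightarrow> E \<subseteq> F \<Longrightarrow> F \<in> C"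
  by (simp add: is_filter_in_def)
lemmas filter_props = filter_props1 filter_props2 filter_props3 filter_props4

lemma ultra_prop:
  assumes Dint: "\<And>E F. E \<in> D \<Longrightarrow> F \<in> D \<Longrightarrow> E \<inter> F \<noteq> {} \<Longrightarrow> E \<inter> F \<in> D"
    and U: "is_filter_in D U"
    and mx: "\<And>U'. is_filter_in D U' \<Longrightarrow> U \<subseteq> U' \<Longrightarrow> U' = U"
    and FD: "F \<in> D" and meet: "\<forall>E\<in>U. F \<inter> E \<noteq> {}"
  shows "F \<in> U"
proof -
  note UF = filter_props[OF U]
  define U' where "U' = {G \<in> D. \<exists>E\<in>U. E \<inter> F \<subseteq> G}"
  have sub: "U \<subseteq> U'"
  proof
    fix E assume "E \<in> U"
    moreover have "E \<in> D" using UF(1) \<open>E \<in> U\<close> by (rule subsetD)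
    moreover have "E \<inter> F \<subseteq> E" by (rule Int_lower1)
    ultimately show "E \<in> U'" unfolding U'_def by blast
  qed
  have filt: "is_filter_in D U'"
    unfolding is_filter_in_def
  proof (intro conjI ballI impI)
    show "U' \<subseteq> D" unfolding U'_def by blast
    show "U' \<noteq> {}" using sub UF(2) by blast
  next
    fix G1 G2 assume G1: "G1 \<in> U'" and G2: "G2 \<in> U'"
    from G1 obtain E1 where E1: "E1 \<in> U" "E1 \<inter> F \<subseteq> G1" "G1 \<in> D" unfolding U'_def by blast
    from G2 obtain E2 where E2: "E2 \<in> U" "E2 \<inter> F \<subseteq> G2" "G2 \<in> D" unfolding U'_def by blast
    have E12: "E1 \<inter> E2 \<in> U" using UF(3) E1(1) E2(1) .
    hence ne: "F \<inter> (E1 \<inter> E2) \<noteq> {}" using meet by blast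
    have sb: "(E1 \<inter> E2) \<inter> F \<subseteq> G1 \<inter> G2" using E1(2) E2(2) by blast
    hence "G1 \<inter> G2 \<noteq> {}" using ne by blast
    hence GD: "G1 \<inter> G2 \<in> D" using Dint E1(3) E2(3) by blast
    show "G1 \<inter> G2 \<in> U'" unfolding U'_def using GD sb E12 by blast
  next
    fix G H assume "G \<in> U'" "H \<in> D" "G \<subseteq> H"
    then show "H \<in> U'" unfolding U'_def by blast
  qed
  have "U' = U" using mx[OF filt sub] .
  moreover have "F \<in> U'"
  proof -
    obtain E where "E \<in> U" using UF(2) by blast
    moreover have "E \<inter> F \<subseteq> F" by (rule Int_lower2)
    ultimately show ?thesis unfolding U'_def using FD by blast
  qed
  ultimately show ?thesis by simp
qed

lemma prop_star:
  assumes Dne: "{} \<notin> D" and C: "is_filter_in D C"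
    and P: "\<forall>F\<in>D. (\<forall>E\<in>C. F \<inter> E \<noteq> {}) \<longrightarrow> (\<exists>E\<in>C. E \<subseteq> F)"
    and fin: "finite \<F>" and FsD: "\<F> \<subseteq> D" and dis: "\<F> \<inter> C = {}"
  shows "\<not> covers \<F> C"
proof
  note CF = filter_props[OF C]
  have P': "\<And>F. F \<in> D \<Longrightarrow> F \<notin> C \<Longrightarrow> \<exists>E\<in>C. F \<inter> E = {}"
  proof (rule ccontr)
    fix F assume F: "F \<in> D" "F \<notin> C" and "\<not> (\<exists>E\<in>C. F \<inter> E = {})"
    hence "\<forall>E\<in>C. F \<inter> E \<noteq> {}" by blast
    then obtain E where "E \<in> C" "E \<subseteq> F" using P F(1) by blast
    then have "F \<in> C" using CF(4) F(1) by blast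
    then show False using F(2) by blast
  qed
  have inter_fin: "finite \<G> \<Longrightarrow> \<G> \<subseteq> \<F> \<Longrightarrow> E \<in> C
        \<Longrightarrow> \<exists>E'\<in>C. E' \<subseteq> E \<and> (\<forall>F\<in>\<G>. F \<inter> E' = {})" for \<G> E
  proof (induction \<G> rule: finite_induct)
    case empty then show ?case by blast
  next
    case (insert F \<G>)
    then obtain E' where E': "E' \<in> C" "E' \<subseteq> E" "\<forall>F\<in>\<G>. F \<inter> E' = {}" by blast
    have "F \<in> D" using insert.prems FsD by blast
    moreover have "F \<notin> C" using insert.prems dis by blast
    ultimately obtain E2 where E2: "E2 \<in> C" "F \<inter> E2 = {}" using P' by blast
    have "E' \<inter> E2 \<in> C" using CF(3) E'(1) E2(1) .
    moreover have "E' \<inter> E2 \<subseteq> E" using E'(2) by blast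
    moreover have "\<forall>F'\<in>insert F \<G>. F' \<inter> (E' \<inter> E2) = {}" using E'(3) E2(2) by blast
    ultimately show ?case by blast
  qed
  assume "covers \<F> C"
  then obtain E where E: "E \<in> C" "E \<subseteq> \<Union>\<F>" unfolding covers_def by blast
  from inter_fin[OF fin subset_refl E(1)] obtain E' where
    E': "E' \<in> C" "E' \<subseteq> E" "\<forall>F\<in>\<F>. F \<inter> E' = {}" by blast
  hence "E' = {}" using E by blast
  moreover have "E' \<in> D" using E'(1) CF(1) by blast
  ultimately show False using Dne by simp
qed

theorem mainTheorem11:
  fixes Obj :: "'o set" and Mor :: "'m set" and r s :: "'m \<Rightarrow> 'o"
    and cmp :: "'m \<Rightarrow> 'm \<Rightarrow> 'm" and idm :: "'o \<Rightarrow> 'm"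
    and v :: 'o and C :: "'m set set"
  assumes "lcsc Obj Mor r s cmp idm"
    and "v \<in> Obj"
    and "is_filter_in (D0 Mor r s cmp v) C"
  shows "C \<in> LamStarStar Mor r s cmp v \<longleftrightarrow>
    (\<forall>F\<in>D0 Mor r s cmp v. (\<forall>E\<in>C. F \<inter> E \<noteq> {}) \<longrightarrow> (\<exists>E\<in>C. E \<subseteq> F))"
proof -
  note L = assms(1)
  let ?D = "D0 Mor r s cmp v"
  have Dne: "{} \<notin> ?D" unfolding D0_def by blast
  have Dint: "\<And>E F. E \<in> ?D \<Longrightarrow> F \<in> ?D \<Longrightarrow> E \<inter> F \<noteq> {} \<Longrightarrow> E \<inter> F \<in> ?D"
    using D0_inter[OF L] by blast
  have starI: "C' \<in> LamStar Mor r s cmp v" if C'f: "is_filter_in ?D C'"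
    and P: "\<forall>F\<in>?D. (\<forall>E\<in>C'. F \<inter> E \<noteq> {}) \<longrightarrow> (\<exists>E\<in>C'. E \<subseteq> F)" for C'
    unfolding LamStar_def using prop_star[OF Dne C'f P] C'f by blast
  show ?thesis
  proof
    assume CS: "C \<in> LamStarStar Mor r s cmp v"
    have mx: "\<And>C'. C' \<in> LamStar Mor r s cmp v \<Longrightarrow> C \<subseteq> C' \<Longrightarrow> C' = C"
      using CS unfolding LamStarStar_def by blast
    let ?A = "{U. is_filter_in ?D U \<and> C \<subseteq> U}"
    have "\<exists>M\<in>?A. \<forall>X\<in>?A. M \<subseteq> X \<longrightarrow> X = M"
    proof (rule subset_Zorn_nonempty)
      show "?A \<noteq> {}" using assms(3) by blast
    next
      fix Ch assume Chne: "Ch \<noteq> {}" and ch: "subset.chain ?A Ch"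
      have ChA: "Ch \<subseteq> ?A" and lin: "\<And>X Y. X \<in> Ch \<Longrightarrow> Y \<in> Ch \<Longrightarrow> X \<subseteq> Y \<or> Y \<subseteq> X"
        using ch unfolding subset.chain_def by blast+
      have fl: "\<And>X. X \<in> Ch \<Longrightarrow> is_filter_in ?D X" using ChA by blast
      have "is_filter_in ?D (\<Union>Ch)"
        unfolding is_filter_in_def
      proof (intro conjI ballI impI)
        show "\<Union>Ch \<subseteq> ?D" using fl filter_props(1) by blast
        show "\<Union>Ch \<noteq> {}" using Chne fl filter_props(2) by blast
      next
        fix E F assume "E \<in> \<Union>Ch" "F \<in> \<Union>Ch"
        then obtain X Y where XY: "X \<in> Ch" "Y \<in> Ch" "E \<in> X" "F \<in> Y" by blast
        show "E \<inter> F \<in> \<Union>Ch"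
        proof (cases "X \<subseteq> Y")
          case True
          then have "E \<inter> F \<in> Y" using filter_props(3)[OF fl[OF XY(2)]] XY by blast
          then show ?thesis using XY by blast
        next
          case False
          then have "Y \<subseteq> X" using lin XY by blast
          then have "E \<inter> F \<in> X" using filter_props(3)[OF fl[OF XY(1)]] XY by blast
          then show ?thesis using XY by blast
        qed
      next
        fix E F assume "E \<in> \<Union>Ch" "F \<in> ?D" "E \<subseteq> F"
        then obtain X where X: "X \<in> Ch" "E \<in> X" by blast
        then have "F \<in> X" using filter_props(4)[OF fl[OF X(1)]] \<open>F \<in> ?D\<close> \<open>E \<subseteq> F\<close> by blast
        then show "F \<in> \<Union>Ch" using X by blast
      qed
      moreover have "C \<subseteq> \<Union>Ch" using Chne ChA by blast
      ultimately show "\<Union>Ch \<in> ?A" by blast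
    qed
    then obtain U where UA: "U \<in> ?A" and Umax: "\<forall>X\<in>?A. U \<subseteq> X \<longrightarrow> X = U" by blast
    have Uf: "is_filter_in ?D U" and CU: "C \<subseteq> U" using UA by auto
    have Umx: "\<And>U'. is_filter_in ?D U' \<Longrightarrow> U \<subseteq> U' \<Longrightarrow> U' = U"
      using Umax CU by blast
    have PU: "\<forall>F\<in>?D. (\<forall>E\<in>U. F \<inter> E \<noteq> {}) \<longrightarrow> (\<exists>E\<in>U. E \<subseteq> F)"
      using ultra_prop[OF Dint Uf Umx] by blast
    have "U = C" using mx[OF starI[OF Uf PU] CU] .
    then show "\<forall>F\<in>?D. (\<forall>E\<in>C. F \<inter> E \<noteq> {}) \<longrightarrow> (\<exists>E\<in>C. E \<subseteq> F)" using PU by simp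
  next
    assume P: "\<forall>F\<in>?D. (\<forall>E\<in>C. F \<inter> E \<noteq> {}) \<longrightarrow> (\<exists>E\<in>C. E \<subseteq> F)"
    note CF = filter_props[OF assms(3)]
    have st: "C \<in> LamStar Mor r s cmp v" by (rule starI[OF assms(3) P])
    show "C \<in> LamStarStar Mor r s cmp v"
      unfolding LamStarStar_def
    proof (intro CollectI conjI st ballI impI)
      fix C' assume C': "C' \<in> LamStar Mor r s cmp v" and sub: "C \<subseteq> C'"
      have C'f: "is_filter_in ?D C'" using C' unfolding LamStar_def by blast
      note C'F = filter_props[OF C'f]
      have "C' \<subseteq> C"
      proof
        fix F assume F: "F \<in> C'"
        have FD: "F \<in> ?D" using C'F(1) F by blast
        have "\<forall>E\<in>C. F \<inter> E \<noteq> {}"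
        proof
          fix E assume "E \<in> C"
          hence "F \<inter> E \<in> C'" using C'F(3) F sub by blast
          hence "F \<inter> E \<in> ?D" using C'F(1) by blast
          then show "F \<inter> E \<noteq> {}" using Dne by auto
        qed
        then obtain E where "E \<in> C" "E \<subseteq> F" using P FD by blast
        then show "F \<in> C" using CF(4) FD by blast
      qed
      then show "C' = C" using sub by blast
    qed
  qed
qed

end
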